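(* Let $p$ be a prime. For integers $s,j\ge1$ with $p\nmid s$, let $\rho_{s,j}$ be the unique root of $X^2-sX+p^j$ which is a $p$-adic unit (with respect to the fixed embedding $\bar{\mathbb Q}\hookrightarrow\bar{\mathbb Q}_p$). Let $\mathbf e=\{e(s,j)\}$ be a nonempty finite collection of positive integers indexed by pairs $(s,j)$ of integers with $s,j\ge1$, $p\nmid s$ and $1\le s<2p^{j/2}$. Then $\rho_{\mathbf e}:=\prod_{s,j}\rho_{s,j}^{e(s,j)}$ is not a root of unity.
   Context: A fixed embedding $\bar{\mathbb Q}\hookrightarrow\bar{\mathbb Q}_p$ is used to decide which root of $X^2-sX+p^j$ is a $p$-adic unit. *)

theory Defs
  imports Complex_Main "HOL-Computational_Algebra.Computational_Algebra"
begin

text \<open>We model the algebraic closure of Q as the algebraic complex numbers.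
  A fixed embedding of it into an algebraic closure of Q_p is recorded through
  the induced absolute value nu on the algebraic numbers: a non-archimedean
  absolute value extending the normalised p-adic absolute value of Q.
  (Every such absolute value arises from an embedding and conversely.)\<close>

definition padic_place :: "nat \<Rightarrow> (complex \<Rightarrow> real) \<Rightarrow> bool" where
  "padic_place p nu \<longleftrightarrow>
     (\<forall>x. algebraic x \<longrightarrow> nu x \<ge> 0 \<and> (nu x = 0 \<longleftrightarrow> x = 0)) \<and>
     (\<forall>x y. algebraic x \<longrightarrow> algebraic y \<longrightarrow>
         nu (x * y) = nu x * nu y \<and> nu (x + y) \<le> max (nu x) (nu y)) \<and>
     (\<forall>n::int. n \<noteq> 0 \<longrightarrow>
         nu (of_int n) = real p powr (- real (multiplicity (int p) n)))"

text \<open>The root of X^2 - sX + p^j which is a p-adic unit (unique when p does not divide s).\<close>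
definition unit_root :: "nat \<Rightarrow> (complex \<Rightarrow> real) \<Rightarrow> nat \<Rightarrow> nat \<Rightarrow> complex" where
  "unit_root p nu s j =
     (THE z. z\<^sup>2 - of_nat s * z + of_nat p ^ j = 0 \<and> nu z = 1)"

definition root_of_unity :: "complex \<Rightarrow> bool" where
  "root_of_unity z \<longleftrightarrow> (\<exists>n::nat. n > 0 \<and> z ^ n = 1)"

end

theory Submission
  imports Defs
begin

lemma nu_int:
  assumes "prime p" "padic_place p nu" "(n::int) \<noteq> 0"
  shows "nu (of_int n) = real p powr (- real (multiplicity (int p) n))"
  using assms unfolding padic_place_def by blast

lemma nu_basic:
  assumes "prime p" "padic_place p nu" "algebraic x" "algebraic y"
  shows "nu (x*y) = nu x * nu y" "nu (x+y) \<le> max (nu x) (nu y)" "nu x \<ge> 0"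
  using assms unfolding padic_place_def by blast+

lemma nu_m1:
  assumes "prime p" "padic_place p nu"
  shows "nu (-1) = 1"
proof -
  have "nu (of_int (-1)) = real p powr (- real (multiplicity (int p) (-1)))"
    by (rule nu_int[OF assms]) simp
  moreover have "multiplicity (int p) (-1) = 0" by (simp add: multiplicity_unit_right)
  moreover have "p > 0" using assms(1) prime_gt_0_nat by blast
  ultimately show ?thesis by simp
qed

lemma nu_neg:
  assumes "prime p" "padic_place p nu" "algebraic x"
  shows "nu (-x) = nu x"
proof -
  have "nu ((-1) * x) = nu (-1) * nu x"
    by (rule nu_basic[OF assms(1,2)]) (use assms in auto)
  thus ?thesis using nu_m1[OF assms(1,2)] by simp
qed

lemma nu_s:
  assumes "prime p" "padic_place p nu" "s \<ge> 1" "\<not> p dvd s"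
  shows "nu (of_nat s) = 1"
proof -
  have "nu (of_int (int s)) = real p powr (- real (multiplicity (int p) (int s)))"
    by (rule nu_int[OF assms(1,2)]) (use assms in auto)
  moreover have "multiplicity (int p) (int s) = 0"
    by (rule not_dvd_imp_multiplicity_0) (use assms in auto)
  moreover have "p > 0" using assms(1) prime_gt_0_nat by blast
  ultimately show ?thesis by simp
qed

lemma nu_pj:
  assumes "prime p" "padic_place p nu"
  shows "nu (of_nat p ^ j) = real p powr (- real j)"
proof -
  have "p > 0" using assms(1) prime_gt_0_nat by blast
  have "nu (of_int (int p ^ j)) = real p powr (- real (multiplicity (int p) (int p ^ j)))"
    by (rule nu_int[OF assms(1,2)]) (use \<open>p > 0\<close> in auto)
  moreover have "multiplicity (int p) (int p ^ j) = j"
    by (rule multiplicity_prime_power) (use assms(1) in \<open>simp add: prime_elem_nat_iff\<close>)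
  ultimately show ?thesis by simp
qed

lemma alg_quad:
  fixes a b :: int and z :: complex
  assumes "z^2 + of_int a * z + of_int b = 0"
  shows "algebraic z"
proof (rule algebraicI[of "[:of_int b, of_int a, 1:]"])
  show "poly [:of_int b, of_int a, 1:] z = 0" using assms
    by (simp add: algebra_simps power2_eq_square)
qed (auto simp: coeff_pCons split: nat.splits)

lemma key:
  assumes p: "prime p" and nu: "padic_place p nu"
    and s: "1 \<le> s" "1 \<le> j" "\<not> p dvd s" "real s < 2 * real p powr (real j / 2)"
  shows "cmod (unit_root p nu s j) ^ 2 = real p ^ j"
proof -
  have p0: "p > 1" using p prime_gt_1_nat by blast
  have "(real p powr (real j / 2))^2 = real p ^ j"
  proof -
    have "(real p powr (real j / 2))^2 = (real p powr (real j / 2)) powr 2"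
      using powr_realpow[of "real p powr (real j / 2)" 2] p0 by simp
    also have "\<dots> = real p powr (real j)" by (simp add: powr_powr)
    also have "\<dots> = real p ^ j" using p0 by (simp add: powr_realpow)
    finally show ?thesis .
  qed
  moreover have "real s ^ 2 < (2 * real p powr (real j / 2)) ^ 2"
    using power_strict_mono[OF s(4), of 2] by simp
  ultimately have lt: "real s ^ 2 < 4 * real p ^ j"
    by (simp add: power_mult_distrib)
  define d where "d = sqrt (4 * real p ^ j - real s ^ 2)"
  have d0: "d > 0" using lt d_def by simp
  have dsq: "d^2 = 4 * real p ^ j - real s ^ 2" using lt d_def by simp
  define z1 where "z1 = Complex (real s / 2) (d/2)"
  define z2 where "z2 = Complex (real s / 2) (- d/2)"
  define P where "P = (\<lambda>z::complex. z\<^sup>2 - of_nat s * z + of_nat p ^ j = 0)"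
  have sum: "z1 + z2 = of_nat s" by (simp add: z1_def z2_def complex_eq_iff)
  have prod: "z1 * z2 = of_nat p ^ j"
  proof -
    have "z1 * z2 = complex_of_real ((real s)^2/4 + d^2/4)"
      by (simp add: z1_def z2_def complex_eq_iff power2_eq_square)
    also have "\<dots> = of_nat p ^ j" using dsq by (simp add: field_simps)
    finally show ?thesis .
  qed
  have fact: "\<And>z. P z \<longleftrightarrow> (z - z1) * (z - z2) = 0"
  proof -
    fix z :: complex
    have "(z - z1) * (z - z2) = z^2 - (z1+z2)*z + z1*z2" by (simp add: algebra_simps power2_eq_square)
    thus "P z \<longleftrightarrow> (z - z1) * (z - z2) = 0" unfolding P_def sum prod by simp
  qed
  have roots: "\<And>z. P z \<longleftrightarrow> z = z1 \<or> z = z2" using fact by simp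
  have neq: "z1 \<noteq> z2" using d0 by (simp add: z1_def z2_def complex_eq_iff)
  have Pz: "P z1" "P z2" using roots by auto
  have algP: "\<And>z. P z \<Longrightarrow> algebraic z"
    by (rule alg_quad[of _ "- int s" "int p ^ j"]) (simp add: P_def)
  have algN: "\<And>z. P z \<Longrightarrow> algebraic (-z)"
    using algP by blast
  have a1: "algebraic z1" "algebraic z2" using algP Pz by auto
  have ns: "nu (of_nat s) = 1" using nu_s[OF p nu s(1) s(3)] .
  have npj: "nu (of_nat p ^ j) = real p powr (- real j)" using nu_pj[OF p nu] .
  have npjlt: "real p powr (- real j) < 1" using p0 s(2) by (simp add: powr_less_one)
  have nprod: "nu z1 * nu z2 = real p powr (- real j)"
    using nu_basic(1)[OF p nu a1] prod npj by simp
  have max1: "1 \<le> max (nu z1) (nu z2)"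
    using nu_basic(2)[OF p nu a1] sum ns by simp
  have b1: "nu z1 \<le> max 1 (nu z2)"
  proof -
    have "z1 = of_nat s + (- z2)" using sum by (simp add: algebra_simps)
    hence "nu z1 \<le> max (nu (of_nat s)) (nu (-z2))"
      using nu_basic(2)[OF p nu, of "of_nat s" "-z2"] a1 by auto
    thus ?thesis using ns nu_neg[OF p nu a1(2)] by simp
  qed
  have b2: "nu z2 \<le> max 1 (nu z1)"
  proof -
    have "z2 = of_nat s + (- z1)" using sum by (simp add: algebra_simps)
    hence "nu z2 \<le> max (nu (of_nat s)) (nu (-z1))"
      using nu_basic(2)[OF p nu, of "of_nat s" "-z1"] a1 by auto
    thus ?thesis using ns nu_neg[OF p nu a1(1)] by simp
  qed
  have g1: "nu z1 \<ge> 0" "nu z2 \<ge> 0" using nu_basic(3)[OF p nu a1] nu_basic(3)[OF p nu a1(2) a1(1)] by auto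
  have le1: "nu z1 \<le> 1 \<and> nu z2 \<le> 1"
  proof (rule ccontr)
    assume "\<not> ?thesis"
    hence "nu z1 > 1 \<and> nu z2 > 1" using b1 b2 by auto
    hence "nu z1 * nu z2 > 1" by (metis less_1_mult)
    thus False using nprod npjlt by simp
  qed
  have ex: "\<exists>!z. P z \<and> nu z = 1"
  proof (cases "nu z1 = 1")
    case True
    hence "nu z2 \<noteq> 1" using nprod npjlt by auto
    thus ?thesis using True Pz roots by (intro ex1I[of _ z1]) auto
  next
    case False
    hence "nu z2 = 1" using max1 le1 by auto
    thus ?thesis using False Pz roots by (intro ex1I[of _ z2]) auto
  qed
  have "P (unit_root p nu s j)"
    using theI'[OF ex] unfolding unit_root_def P_def by simp
  hence u: "unit_root p nu s j = z1 \<or> unit_root p nu s j = z2" using roots by simp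
  have c1: "cmod z1 ^ 2 = real p ^ j" "cmod z2 ^ 2 = real p ^ j"
  proof -
    have e: "(real s)\<^sup>2 / 4 + (4 * real p ^ j - (real s)\<^sup>2) / 4 = real p ^ j" by (simp add: field_simps)
    show "cmod z1 ^ 2 = real p ^ j" "cmod z2 ^ 2 = real p ^ j"
      using dsq by (simp_all add: z1_def z2_def cmod_def power_divide e)
  qed
  show ?thesis using u c1 by auto
qed

theorem lemma2p3:
  fixes p :: nat and nu :: "complex \<Rightarrow> real"
    and E :: "(nat \<times> nat) set" and e :: "nat \<times> nat \<Rightarrow> nat"
  assumes "prime p"
    and "padic_place p nu"
    and "finite E" and "E \<noteq> {}"
    and "\<And>s j. (s, j) \<in> E \<Longrightarrow>
           1 \<le> s \<and> 1 \<le> j \<and> \<not> p dvd s \<and>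
           real s < 2 * real p powr (real j / 2) \<and> e (s, j) > 0"
  shows "\<not> root_of_unity (\<Prod>(s, j)\<in>E. unit_root p nu s j ^ e (s, j))"
proof
  have p0: "p > 1" using assms(1) prime_gt_1_nat by blast
  have f1: "cmod (unit_root p nu s j ^ e (s, j)) > 1" if "(s,j) \<in> E" for s j
  proof -
    have h: "1 \<le> s \<and> 1 \<le> j \<and> \<not> p dvd s \<and> real s < 2 * real p powr (real j / 2) \<and> e (s, j) > 0"
      using assms(5) that by blast
    have "cmod (unit_root p nu s j) ^ 2 = real p ^ j" using key[OF assms(1,2)] h by blast
    moreover have "real p ^ j > 1" using p0 h by simp
    ultimately have "cmod (unit_root p nu s j) > 1"
      using power_less_imp_less_base[of 1 2 "cmod (unit_root p nu s j)"] by simp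
    thus ?thesis using h by (simp add: norm_power)
  qed
  have gt: "cmod (\<Prod>(s, j)\<in>E. unit_root p nu s j ^ e (s, j)) > 1"
    unfolding prod_norm[symmetric]
    using assms(3,4) f1
  proof (induction E rule: finite_ne_induct)
    case (singleton x) thus ?case by (cases x) auto
  next
    case (insert x F)
    have "(\<Prod>y\<in>insert x F. cmod (case y of (s, j) \<Rightarrow> unit_root p nu s j ^ e (s, j)))
       = cmod (case x of (s, j) \<Rightarrow> unit_root p nu s j ^ e (s, j)) *
         (\<Prod>y\<in>F. cmod (case y of (s, j) \<Rightarrow> unit_root p nu s j ^ e (s, j)))"
      using insert by simp
    moreover have a: "cmod (case x of (s, j) \<Rightarrow> unit_root p nu s j ^ e (s, j)) > 1"
      using insert.prems by (cases x) auto
    moreover have b: "(\<Prod>y\<in>F. cmod (case y of (s, j) \<Rightarrow> unit_root p nu s j ^ e (s, j))) > 1"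
      using insert by auto
    ultimately show ?case using less_1_mult[OF a b] by simp
  qed
  assume "root_of_unity (\<Prod>(s, j)\<in>E. unit_root p nu s j ^ e (s, j))"
  then obtain n where n: "n > 0" "(\<Prod>(s, j)\<in>E. unit_root p nu s j ^ e (s, j)) ^ n = 1"
    unfolding root_of_unity_def by blast
  hence "cmod (\<Prod>(s, j)\<in>E. unit_root p nu s j ^ e (s, j)) ^ n = 1"
    by (simp add: norm_power[symmetric])
  moreover have "cmod (\<Prod>(s, j)\<in>E. unit_root p nu s j ^ e (s, j)) ^ n > 1"
    using one_less_power[OF gt n(1)] .
  ultimately show False by simp
qed

end
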